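(* Let $H$ be a fixed graph with $k=|V(H)|$ vertices and let $p\in[0,1)$. Then the algorithm $\mathrm{ALG}_p$ for the Delayed $H$-Node-Deletion Problem with predictions is $\bigl(k-p(k-1),\; k+\tfrac{p}{1-p}\bigr)$-competitive; that is, its consistency is at most $k-p(k-1)$ and its robustness is at most $k+p/(1-p)$.
   Context: All graphs are finite, simple and undirected. An induced copy of $H$ in $G$ is an induced subgraph isomorphic to $H$; $G$ is $H$-free if it has none. For $S\subseteq V(G)$, $G-S=G[V(G)\setminus S]$. An online graph $G$ has vertices $v_1,\dots,v_n$ revealed one at a time (with edges to earlier vertices); $G_t=G[\{v_1,\dots,v_t\}]$. Delayed $H$-Node-Deletion Problem: an online algorithm must choose sets $S_1\subseteq S_2\subseteq\dots\subseteq S_n$ with $S_t\subseteq V(G_t)$ such that $G_t-S_t$ is $H$-free for all $t$, where $S_t$ may depend only on $G_t$ (and, with predictions, on $u_1(G),\dots,u_t(G)$). The cost is $|S_n|$. $\mathrm{OPT}(G)$ denotes the minimum size of a set $S\subseteq V(G)$ with $G-S$ $H$-free. Predictions: when $v_t$ is revealed, the algorithm receives a bit $u_t(G)\in\{0,1\}$. The advice is correct if the set of vertices with bit $1$ is a minimum-size set $S$ with $G-S$ $H$-free. An algorithm is $(r,w)$-competitive if there is a constant $\alpha\ge 0$ such that for every online graph $G$: (i) for some correct advice, its cost is at most $r\cdot\mathrm{OPT}(G)+\alpha$, and (ii) for every advice sequence (correct or not), its cost is at most $w\cdot\mathrm{OPT}(G)+\alpha$. The consistency (resp. robustness) is the infimum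 of such $r$ (resp. $w$). Algorithm $\mathrm{ALG}_p$: it maintains counters $d$ and $e$, initially $0$. Deleted vertices are removed permanently. After each vertex is revealed, as long as the remaining graph contains an induced copy of $H$, it picks one such copy (arbitrarily) and applies the first applicable case: (Case 1) If the copy contains no vertex with advice bit $1$ (or such a copy has appeared at some earlier point), then from now on the algorithm deletes all vertices of every copy of $H$ that appears, without changing $d$ or $e$. (Case 2) Else, if $d=0$ or $e/(e+d)>p$: delete all $k$ vertices of the copy and increase $d$ by $1$. (Case 3) Else: delete one vertex of the copy with advice bit $1$ (the earliest-revealed such vertex) and increase $e$ by $1$. This is repeated until the remaining graph is $H$-free before the next vertex is revealed. *)

theory Defs
  imports Main "HOL.Real"
begin

(* Online graph G on vertices 0,1,...,n-1, revealed in this order (vertex t-1 is v_t).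
   E is a symmetric irreflexive edge relation; G_t is G restricted to {0..<t}. *)

definition simple_graph_rel :: "('a \<Rightarrow> 'a \<Rightarrow> bool) \<Rightarrow> 'a set \<Rightarrow> bool" where
  "simple_graph_rel R V \<longleftrightarrow> (\<forall>x\<in>V. \<forall>y\<in>V. R x y \<longrightarrow> R y x) \<and> (\<forall>x\<in>V. \<not> R x x)"

definition induced_copy ::
  "'b set \<Rightarrow> ('b \<Rightarrow> 'b \<Rightarrow> bool) \<Rightarrow> (nat \<Rightarrow> nat \<Rightarrow> bool) \<Rightarrow> nat set \<Rightarrow> bool" where
  "induced_copy VH EH E C \<longleftrightarrow>
     (\<exists>f. bij_betw f VH C \<and> (\<forall>x\<in>VH. \<forall>y\<in>VH. EH x y \<longleftrightarrow> E (f x) (f y)))"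

definition H_free ::
  "'b set \<Rightarrow> ('b \<Rightarrow> 'b \<Rightarrow> bool) \<Rightarrow> (nat \<Rightarrow> nat \<Rightarrow> bool) \<Rightarrow> nat set \<Rightarrow> bool" where
  "H_free VH EH E X \<longleftrightarrow> \<not> (\<exists>C. C \<subseteq> X \<and> induced_copy VH EH E C)"

definition opt ::
  "'b set \<Rightarrow> ('b \<Rightarrow> 'b \<Rightarrow> bool) \<Rightarrow> (nat \<Rightarrow> nat \<Rightarrow> bool) \<Rightarrow> nat \<Rightarrow> nat" where
  "opt VH EH E n = (LEAST m. \<exists>S. S \<subseteq> {0..<n} \<and> card S = m \<and> H_free VH EH E ({0..<n} - S))"

definition correct_advice ::
  "'b set \<Rightarrow> ('b \<Rightarrow> 'b \<Rightarrow> bool) \<Rightarrow> (nat \<Rightarrow> nat \<Rightarrow> bool) \<Rightarrow> nat \<Rightarrow> (nat \<Rightarrow> bool) \<Rightarrow> bool" where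
  "correct_advice VH EH E n u \<longleftrightarrow>
     H_free VH EH E ({0..<n} - {v. v < n \<and> u v}) \<and> card {v. v < n \<and> u v} = opt VH EH E n"

(* State of ALG_p: deleted vertices, counters d and e, and whether Case 1 has been triggered *)
record alg_state =
  deleted :: "nat set"
  dcnt :: nat
  ecnt :: nat
  mode :: bool

(* One iteration of ALG_p while the vertices X = {0..<t} are revealed:
   pick (arbitrarily) an induced copy C of H in the remaining graph and apply the first applicable case *)
inductive alg_step ::
  "'b set \<Rightarrow> ('b \<Rightarrow> 'b \<Rightarrow> bool) \<Rightarrow> (nat \<Rightarrow> nat \<Rightarrow> bool) \<Rightarrow> (nat \<Rightarrow> bool) \<Rightarrow> real \<Rightarrow> nat set
     \<Rightarrow> alg_state \<Rightarrow> alg_state \<Rightarrow> bool"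
  for VH EH E u p X where
  case1: "\<lbrakk> C \<subseteq> X - deleted s; induced_copy VH EH E C; mode s \<or> (\<forall>v\<in>C. \<not> u v) \<rbrakk>
     \<Longrightarrow> alg_step VH EH E u p X s (s\<lparr>deleted := deleted s \<union> C, mode := True\<rparr>)"
| case2: "\<lbrakk> C \<subseteq> X - deleted s; induced_copy VH EH E C; \<not> mode s; \<exists>v\<in>C. u v;
     dcnt s = 0 \<or> real (ecnt s) / real (ecnt s + dcnt s) > p \<rbrakk>
     \<Longrightarrow> alg_step VH EH E u p X s (s\<lparr>deleted := deleted s \<union> C, dcnt := Suc (dcnt s)\<rparr>)"
| case3: "\<lbrakk> C \<subseteq> X - deleted s; induced_copy VH EH E C; \<not> mode s; \<exists>v\<in>C. u v;
     \<not> (dcnt s = 0 \<or> real (ecnt s) / real (ecnt s + dcnt s) > p) \<rbrakk>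
     \<Longrightarrow> alg_step VH EH E u p X s
           (s\<lparr>deleted := insert (Min {v\<in>C. u v}) (deleted s), ecnt := Suc (ecnt s)\<rparr>)"

(* alg_run ... t s: s is a possible state of ALG_p after v_1..v_t have been revealed
   and processed (the remaining graph is H-free) *)
inductive alg_run ::
  "'b set \<Rightarrow> ('b \<Rightarrow> 'b \<Rightarrow> bool) \<Rightarrow> (nat \<Rightarrow> nat \<Rightarrow> bool) \<Rightarrow> (nat \<Rightarrow> bool) \<Rightarrow> real
     \<Rightarrow> nat \<Rightarrow> alg_state \<Rightarrow> bool"
  for VH EH E u p where
  init: "alg_run VH EH E u p 0 \<lparr>deleted = {}, dcnt = 0, ecnt = 0, mode = False\<rparr>"
| reveal: "\<lbrakk> alg_run VH EH E u p t s; (alg_step VH EH E u p {0..<Suc t})\<^sup>*\<^sup>* s s';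
     H_free VH EH E ({0..<Suc t} - deleted s') \<rbrakk>
     \<Longrightarrow> alg_run VH EH E u p (Suc t) s'"

(* ALG_p is (r,w)-competitive (for every choice of copies it makes) *)
definition alg_competitive ::
  "'b set \<Rightarrow> ('b \<Rightarrow> 'b \<Rightarrow> bool) \<Rightarrow> real \<Rightarrow> real \<Rightarrow> real \<Rightarrow> bool" where
  "alg_competitive VH EH p r w \<longleftrightarrow>
     (\<exists>\<alpha>\<ge>0. \<forall>(E :: nat \<Rightarrow> nat \<Rightarrow> bool) n. simple_graph_rel E UNIV \<longrightarrow>
        (\<exists>u. correct_advice VH EH E n u \<and>
             (\<forall>s. alg_run VH EH E u p n s \<longrightarrow>
                  real (card (deleted s)) \<le> r * real (opt VH EH E n) + \<alpha>)) \<and>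
        (\<forall>u s. alg_run VH EH E u p n s \<longrightarrow>
                  real (card (deleted s)) \<le> w * real (opt VH EH E n) + \<alpha>))"

end

theory Submission
  imports Defs
begin

definition disj_fam :: "nat set set \<Rightarrow> bool" where
 "disj_fam F \<longleftrightarrow> (\<forall>A\<in>F. \<forall>B\<in>F. A \<noteq> B \<longrightarrow> A \<inter> B = {})"

lemma copy_card:
  assumes "finite VH" "induced_copy VH EH E C"
  shows "card C = card VH" "finite C"
  using assms unfolding induced_copy_def by (auto simp: bij_betw_same_card bij_betw_finite)

lemma copy_ne:
  assumes "VH \<noteq> {}" "induced_copy VH EH E C"
  shows "C \<noteq> {}"
  using assms unfolding induced_copy_def bij_betw_def by auto

lemma hit_card:
  assumes "finite S" "disj_fam F" "\<forall>C\<in>F. C \<inter> S \<noteq> {}"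
  shows "card F \<le> card S"
proof -
  define g where "g C = (SOME v. v \<in> C \<inter> S)" for C
  have g: "g C \<in> C \<inter> S" if "C \<in> F" for C
    unfolding g_def some_in_eq using assms(3) that by auto
  have "inj_on g F"
  proof (rule inj_onI)
    fix A B assume AB: "A \<in> F" "B \<in> F" "g A = g B"
    then have "g A \<in> A \<inter> B" using g[OF AB(1)] g[OF AB(2)] by simp
    then show "A = B" using assms(2) AB unfolding disj_fam_def by auto
  qed
  moreover have "g ` F \<subseteq> S" using g by blast
  ultimately show ?thesis using card_inj_on_le assms(1) by blast
qed

lemma step_sub:
  assumes "alg_step VH EH E u p X s s'" "finite X" "deleted s \<subseteq> X"
  shows "deleted s' \<subseteq> X"
  using assms(1)
proof (cases rule: alg_step.cases)
  case (case3 C)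
  have "finite C" using case3 assms(2) finite_subset by blast
  then have "Min {v\<in>C. u v} \<in> {v\<in>C. u v}" using case3 by (intro Min_in) auto
  then show ?thesis using case3 assms by auto
qed (use assms in auto)

lemma steps_sub:
  "(alg_step VH EH E u p X)\<^sup>*\<^sup>* s s' \<Longrightarrow> finite X \<Longrightarrow> deleted s \<subseteq> X \<Longrightarrow> deleted s' \<subseteq> X"
  by (induction rule: rtranclp_induct) (auto dest: step_sub)

lemma run_sub: "alg_run VH EH E u p t s \<Longrightarrow> deleted s \<subseteq> {0..<t}"
proof (induction rule: alg_run.induct)
  case init then show ?case by simp
next
  case (reveal t s s')
  have "deleted s \<subseteq> {0..<Suc t}" using reveal by auto
  then show ?case using steps_sub[OF reveal(2)] by simp
qed

definition RI :: "'b set \<Rightarrow> ('b \<Rightarrow> 'b \<Rightarrow> bool) \<Rightarrow> (nat \<Rightarrow> nat \<Rightarrow> bool) \<Rightarrow> real \<Rightarrow> alg_state \<Rightarrow> bool" where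
  "RI VH EH E p s \<longleftrightarrow> finite (deleted s) \<and>
     (\<exists>F. F \<subseteq> Pow (deleted s) \<and> finite F \<and> disj_fam F \<and> (\<forall>C\<in>F. induced_copy VH EH E C)
        \<and> dcnt s \<le> card F \<and> card (deleted s) \<le> card VH * card F + ecnt s)
     \<and> (1-p) * ecnt s \<le> p * dcnt s + (1-p)"

lemma RI_full:
  assumes fin: "finite VH" and ne: "VH \<noteq> {}" and R: "RI VH EH E p s"
    and C: "C \<subseteq> X - deleted s" "induced_copy VH EH E C"
  shows "finite (deleted s \<union> C) \<and> (\<exists>F. F \<subseteq> Pow (deleted s \<union> C) \<and> finite F \<and> disj_fam F
        \<and> (\<forall>C\<in>F. induced_copy VH EH E C)
        \<and> Suc (dcnt s) \<le> card F \<and> card (deleted s \<union> C) \<le> card VH * card F + ecnt s)"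
proof -
  obtain F where F: "F \<subseteq> Pow (deleted s)" "finite F" "disj_fam F" "\<forall>C\<in>F. induced_copy VH EH E C"
    "dcnt s \<le> card F" "card (deleted s) \<le> card VH * card F + ecnt s"
    and fd: "finite (deleted s)" using R unfolding RI_def by blast
  have cC: "card C = card VH" "finite C" using copy_card[OF fin C(2)] by auto
  have Cne: "C \<noteq> {}" using copy_ne[OF ne C(2)] .
  have notin: "C \<notin> F" using F(1) C(1) Cne by blast
  have cardF: "card (insert C F) = Suc (card F)" using notin F(2) by simp
  have "card (deleted s \<union> C) \<le> card (deleted s) + card C" by (rule card_Un_le)
  then have "card (deleted s \<union> C) \<le> card VH * card (insert C F) + ecnt s"
    using F(6) cC cardF by simp
  moreover have "disj_fam (insert C F)"
    using F(3) F(1) C(1) unfolding disj_fam_def by blast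
  moreover have "insert C F \<subseteq> Pow (deleted s \<union> C)" using F(1) by blast
  ultimately show ?thesis using F cC fd cardF C(2)
    by (intro conjI exI[of _ "insert C F"]) auto
qed

lemma RI_step:
  assumes "alg_step VH EH E u p X s s'" "finite X" "finite VH" "VH \<noteq> {}" "0 \<le> p" "p < 1"
    "RI VH EH E p s"
  shows "RI VH EH E p s'"
  using assms(1)
proof (cases rule: alg_step.cases)
  case (case1 C)
  note A = RI_full[OF assms(3,4,7) case1(2,3)]
  have "(1-p) * ecnt s \<le> p * dcnt s + (1-p)" using assms(7) unfolding RI_def by blast
  then obtain F where "F \<subseteq> Pow (deleted s \<union> C) \<and> finite F \<and> disj_fam F
        \<and> (\<forall>C\<in>F. induced_copy VH EH E C)
        \<and> Suc (dcnt s) \<le> card F \<and> card (deleted s \<union> C) \<le> card VH * card F + ecnt s"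
    using A by blast
  then show ?thesis using case1 A \<open>(1-p) * ecnt s \<le> p * dcnt s + (1-p)\<close> unfolding RI_def
    by (intro conjI exI[of _ F]) auto
next
  case (case2 C)
  note A = RI_full[OF assms(3,4,7) case2(2,3)]
  have "(1-p) * ecnt s \<le> p * dcnt s + (1-p)" using assms(7) unfolding RI_def by blast
  moreover have "p * dcnt s \<le> p * Suc (dcnt s)" using assms(5) by (simp add: mult_left_mono)
  ultimately show ?thesis using case2 A unfolding RI_def by auto
next
  case (case3 C)
  obtain F where F: "F \<subseteq> Pow (deleted s)" "finite F" "disj_fam F" "\<forall>C\<in>F. induced_copy VH EH E C"
    "dcnt s \<le> card F" "card (deleted s) \<le> card VH * card F + ecnt s"
    and fd: "finite (deleted s)" using assms(7) unfolding RI_def by blast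
  let ?m = "Min {v\<in>C. u v}"
  have "card (insert ?m (deleted s)) \<le> Suc (card (deleted s))" by (simp add: card_insert_if fd)
  then have c1: "card (insert ?m (deleted s)) \<le> card VH * card F + Suc (ecnt s)" using F(6) by simp
  have d: "dcnt s > 0" "real (ecnt s) / real (ecnt s + dcnt s) \<le> p" using case3 by auto
  then have "real (ecnt s) \<le> p * real (ecnt s + dcnt s)"
    by (simp add: pos_divide_le_eq mult.commute)
  then have c2: "(1-p) * Suc (ecnt s) \<le> p * dcnt s + (1-p)" by (simp add: algebra_simps)
  show ?thesis unfolding RI_def using case3 fd F c1 c2
    by (intro conjI exI[of _ F]) auto
qed

lemma RI_steps:
  "(alg_step VH EH E u p X)\<^sup>*\<^sup>* s s' \<Longrightarrow> finite X \<Longrightarrow> finite VH \<Longrightarrow> VH \<noteq> {} \<Longrightarrow> 0 \<le> p \<Longrightarrow> p < 1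
   \<Longrightarrow> RI VH EH E p s \<Longrightarrow> RI VH EH E p s'"
proof (induction rule: rtranclp_induct)
  case base then show ?case by simp
next
  case (step y z) then show ?case using RI_step[of VH EH E u p X y z] by blast
qed

lemma RI_run:
  "alg_run VH EH E u p t s \<Longrightarrow> finite VH \<Longrightarrow> VH \<noteq> {} \<Longrightarrow> 0 \<le> p \<Longrightarrow> p < 1 \<Longrightarrow> RI VH EH E p s"
proof (induction rule: alg_run.induct)
  case init
  show ?case using init unfolding RI_def disj_fam_def by (intro conjI exI[of _ "{}"]) auto
next
  case (reveal t s s')
  then show ?case using RI_steps[OF reveal(2)] by auto
qed

definition CI :: "'b set \<Rightarrow> nat set \<Rightarrow> real \<Rightarrow> alg_state \<Rightarrow> bool" where
  "CI VH S p s \<longleftrightarrow> finite (deleted s) \<and> \<not> mode s \<and>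
     real (card (deleted s)) \<le> real (card VH) * dcnt s + ecnt s \<and>
     dcnt s + ecnt s \<le> card (deleted s \<inter> S) \<and> p * (dcnt s + ecnt s) \<le> ecnt s + 1"

lemma CI_step:
  assumes "alg_step VH EH E (\<lambda>v. v \<in> S) p X s s'" "finite X" "finite VH" "0 \<le> p" "p < 1"
    "X \<subseteq> {0..<n}" "\<forall>C. C \<subseteq> {0..<n} \<longrightarrow> induced_copy VH EH E C \<longrightarrow> C \<inter> S \<noteq> {}"
    "CI VH S p s"
  shows "CI VH S p s'"
  using assms(1)
proof (cases rule: alg_step.cases)
  case (case1 C)
  have "C \<subseteq> {0..<n}" using case1(2) assms(6) by (meson Diff_subset subset_trans)
  then have ne: "C \<inter> S \<noteq> {}" using assms(7) case1(3) by simp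
  have "\<not> mode s" using assms(8) unfolding CI_def by blast
  then have "\<forall>v\<in>C. v \<notin> S" using case1(4) by simp
  then show ?thesis using ne by auto
next
  case (case2 C)
  have I: "finite (deleted s)" "\<not> mode s" "real (card (deleted s)) \<le> real (card VH) * dcnt s + ecnt s"
     "dcnt s + ecnt s \<le> card (deleted s \<inter> S)" "p * (dcnt s + ecnt s) \<le> ecnt s + 1"
    using assms(8) unfolding CI_def by auto
  have cC: "card C = card VH" "finite C" using copy_card[OF assms(3) case2(3)] by auto
  have "card (deleted s \<union> C) \<le> card (deleted s) + card C" by (rule card_Un_le)
  then have a: "real (card (deleted s \<union> C)) \<le> real (card VH) * Suc (dcnt s) + ecnt s"
    using I(3) cC by (simp add: algebra_simps)
  have eq: "(deleted s \<union> C) \<inter> S = (deleted s \<inter> S) \<union> (C \<inter> S)" by blast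
  have "card ((deleted s \<union> C) \<inter> S) = card (deleted s \<inter> S) + card (C \<inter> S)"
    unfolding eq using I(1) cC(2) case2(2) by (intro card_Un_disjoint) auto
  moreover have "card (C \<inter> S) \<ge> 1"
  proof -
    have "C \<inter> S \<noteq> {}" using case2(5) by auto
    then have "card (C \<inter> S) > 0" using cC(2) by (simp add: card_gt_0_iff)
    then show ?thesis by simp
  qed
  ultimately have b: "Suc (dcnt s) + ecnt s \<le> card ((deleted s \<union> C) \<inter> S)" using I(4) by simp
  have c: "p * (Suc (dcnt s) + ecnt s) \<le> ecnt s + 1"
  proof (cases "dcnt s = 0")
    case True
    have "p * (1 + real (ecnt s)) \<le> 1 * (1 + real (ecnt s))" using assms(5) by (intro mult_right_mono) auto
    then show ?thesis using True by simp
  next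
    case False
    then have pos: "real (ecnt s + dcnt s) > 0" by simp
    have "real (ecnt s) / real (ecnt s + dcnt s) > p" using case2(6) False by simp
    then have "real (ecnt s) > p * real (ecnt s + dcnt s)"
      using pos by (simp add: pos_less_divide_eq mult.commute)
    then show ?thesis using assms(5) by (simp add: algebra_simps)
  qed
  have f: "finite (deleted s \<union> C)" using I(1) cC(2) by simp
  show ?thesis unfolding CI_def case2(1) using f I(2) a b c by simp
next
  case (case3 C)
  have I: "finite (deleted s)" "\<not> mode s" "real (card (deleted s)) \<le> real (card VH) * dcnt s + ecnt s"
     "dcnt s + ecnt s \<le> card (deleted s \<inter> S)" "p * (dcnt s + ecnt s) \<le> ecnt s + 1"
    using assms(8) unfolding CI_def by auto
  let ?m = "Min {v\<in>C. v \<in> S}"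
  have "finite C" using case3 assms(2) finite_subset by blast
  then have m: "?m \<in> {v\<in>C. v \<in> S}" using case3 by (intro Min_in) auto
  then have mn: "?m \<notin> deleted s" using case3 by auto
  have a: "card (insert ?m (deleted s)) = Suc (card (deleted s))" using mn I(1) by simp
  have "insert ?m (deleted s) \<inter> S = insert ?m (deleted s \<inter> S)" using m by auto
  then have b: "card (insert ?m (deleted s) \<inter> S) = Suc (card (deleted s \<inter> S))" using mn I(1) by simp
  have c: "p * (dcnt s + Suc (ecnt s)) \<le> Suc (ecnt s) + 1" using I(5) assms(5) by (simp add: algebra_simps)
  have f: "finite (insert ?m (deleted s))" using I(1) by simp
  have a': "real (card (insert ?m (deleted s))) \<le> real (card VH) * dcnt s + Suc (ecnt s)"
    using a I(3) by simp
  have b': "dcnt s + Suc (ecnt s) \<le> card (insert ?m (deleted s) \<inter> S)" using b I(4) by simp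
  show ?thesis unfolding CI_def case3(1) using f I(2) a' b' c by simp
qed

lemma CI_steps:
  "(alg_step VH EH E (\<lambda>v. v \<in> S) p X)\<^sup>*\<^sup>* s s' \<Longrightarrow> finite X \<Longrightarrow> finite VH \<Longrightarrow> 0 \<le> p \<Longrightarrow> p < 1 \<Longrightarrow>
    X \<subseteq> {0..<n} \<Longrightarrow> \<forall>C. C \<subseteq> {0..<n} \<longrightarrow> induced_copy VH EH E C \<longrightarrow> C \<inter> S \<noteq> {} \<Longrightarrow>
    CI VH S p s \<Longrightarrow> CI VH S p s'"
proof (induction rule: rtranclp_induct)
  case base then show ?case by simp
next
  case (step y z) then show ?case using CI_step[of VH EH E S p X y z n] by blast
qed

lemma CI_run:
  "alg_run VH EH E (\<lambda>v. v \<in> S) p t s \<Longrightarrow> t \<le> n \<Longrightarrow> finite VH \<Longrightarrow> 0 \<le> p \<Longrightarrow> p < 1 \<Longrightarrow>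
    \<forall>C. C \<subseteq> {0..<n} \<longrightarrow> induced_copy VH EH E C \<longrightarrow> C \<inter> S \<noteq> {} \<Longrightarrow> CI VH S p s"
proof (induction rule: alg_run.induct)
  case init
  show ?case unfolding CI_def by simp
next
  case (reveal t s s')
  have "{0..<Suc t} \<subseteq> {0..<n}" using reveal by auto
  then show ?case using CI_steps[OF reveal(2)] reveal by auto
qed

theorem mainTheorem3:
  fixes VH :: "'b set" and EH :: "'b \<Rightarrow> 'b \<Rightarrow> bool" and p :: real
  assumes "finite VH" and "VH \<noteq> {}" and "simple_graph_rel EH VH"
    and "0 \<le> p" and "p < 1"
  shows "alg_competitive VH EH p (real (card VH) - p * (real (card VH) - 1))
                                 (real (card VH) + p / (1 - p))"
  unfolding alg_competitive_def
proof (intro exI[of _ "real (card VH) + 1"] conjI allI impI)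
  show "0 \<le> real (card VH) + 1" by simp
  fix E :: "nat \<Rightarrow> nat \<Rightarrow> bool" and n
  let ?k = "real (card VH)"
  have k1: "?k \<ge> 1" using assms(1,2) by (simp add: Suc_leI card_gt_0_iff)
  let ?P = "\<lambda>m. \<exists>S. S \<subseteq> {0..<n} \<and> card S = m \<and> H_free VH EH E ({0..<n} - S)"
  have "H_free VH EH E ({0..<n} - {0..<n})"
    unfolding H_free_def using copy_ne[OF assms(2)] by auto
  then have "?P (card {0..<n})" by blast
  then have "?P (opt VH EH E n)" unfolding opt_def by (rule LeastI)
  then obtain S where S: "S \<subseteq> {0..<n}" "card S = opt VH EH E n" "H_free VH EH E ({0..<n} - S)"
    by blast
  have finS: "finite S" using S(1) finite_subset by blast
  have hit: "\<forall>C. C \<subseteq> {0..<n} \<longrightarrow> induced_copy VH EH E C \<longrightarrow> C \<inter> S \<noteq> {}"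
    using S(3) unfolding H_free_def by blast
  show "\<exists>u. correct_advice VH EH E n u \<and>
          (\<forall>s. alg_run VH EH E u p n s \<longrightarrow>
             real (card (deleted s)) \<le> (?k - p * (?k - 1)) * real (opt VH EH E n) + (?k + 1))"
  proof (intro exI[of _ "\<lambda>v. v \<in> S"] conjI allI impI)
    have eqS: "{v. v < n \<and> v \<in> S} = S" using S(1) by auto
    show "correct_advice VH EH E n (\<lambda>v. v \<in> S)" unfolding correct_advice_def eqS using S by simp
    fix s assume run: "alg_run VH EH E (\<lambda>v. v \<in> S) p n s"
    have I: "CI VH S p s" using CI_run[OF run _ assms(1,4,5) hit] by simp
    define d where "d = real (dcnt s)"
    define e where "e = real (ecnt s)"
    have i1: "real (card (deleted s)) \<le> ?k * d + e"
      and i2: "dcnt s + ecnt s \<le> card (deleted s \<inter> S)" and i3: "p * (d + e) \<le> e + 1"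
      using I unfolding CI_def d_def e_def by auto
    have "card (deleted s \<inter> S) \<le> card S" using finS by (intro card_mono) auto
    then have xo: "d + e \<le> real (opt VH EH E n)" using i2 S(2) unfolding d_def e_def by linarith
    have "(?k - 1) * (p * (d + e) - 1) \<le> (?k - 1) * e"
      using i3 k1 by (intro mult_left_mono) auto
    then have A: "real (card (deleted s)) \<le> (?k - p * (?k - 1)) * (d + e) + (?k - 1)"
      using i1 by (simp add: algebra_simps)
    have "p * (?k - 1) \<le> 1 * (?k - 1)" using assms(5) k1 by (intro mult_right_mono) auto
    then have "(?k - p * (?k - 1)) * (d + e) \<le> (?k - p * (?k - 1)) * real (opt VH EH E n)"
      using xo by (intro mult_left_mono) auto
    then show "real (card (deleted s)) \<le> (?k - p * (?k - 1)) * real (opt VH EH E n) + (?k + 1)"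
      using A by linarith
  qed
  fix u s assume run: "alg_run VH EH E u p n s"
  show "real (card (deleted s)) \<le> (?k + p / (1 - p)) * real (opt VH EH E n) + (?k + 1)"
  proof -
    have sub: "deleted s \<subseteq> {0..<n}" using run_sub[OF run] .
    have R: "RI VH EH E p s" using RI_run[OF run assms(1,2,4,5)] .
    obtain F where F: "F \<subseteq> Pow (deleted s)" "finite F" "disj_fam F" "\<forall>C\<in>F. induced_copy VH EH E C"
      "dcnt s \<le> card F" "card (deleted s) \<le> card VH * card F + ecnt s"
      and ce: "(1-p) * ecnt s \<le> p * dcnt s + (1-p)" using R unfolding RI_def by blast
    have "\<forall>C\<in>F. C \<inter> S \<noteq> {}" using hit F(1,4) sub by blast
    then have Fo: "card F \<le> opt VH EH E n" using hit_card[OF finS F(3)] S(2) by simp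
    define f where "f = real (card F)"
    have p1: "1 - p > 0" using assms(5) by simp
    have "real (ecnt s) \<le> (p * dcnt s + (1-p)) / (1-p)"
      using ce p1 by (simp add: pos_le_divide_eq mult.commute)
    also have "\<dots> = p * dcnt s / (1-p) + 1" using p1 by (simp add: field_simps)
    also have "\<dots> \<le> p * f / (1-p) + 1"
      using F(5) assms(4) p1 unfolding f_def by (intro add_right_mono divide_right_mono mult_left_mono) auto
    finally have eb: "real (ecnt s) \<le> p * f / (1-p) + 1" .
    have "real (card (deleted s)) \<le> ?k * f + real (ecnt s)"
      using F(6) unfolding f_def by (metis of_nat_add of_nat_le_iff of_nat_mult)
    also have "\<dots> \<le> (?k + p / (1-p)) * f + 1" using eb by (simp add: algebra_simps)
    also have "\<dots> \<le> (?k + p / (1-p)) * real (opt VH EH E n) + 1"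
      using Fo p1 assms(4) unfolding f_def by (intro add_right_mono mult_left_mono) auto
    finally show "real (card (deleted s)) \<le> (?k + p / (1 - p)) * real (opt VH EH E n) + (?k + 1)"
      by simp
  qed
qed

end
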